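(* Let $(M,d)$ be a compact metric space, $\varphi:M\to M$ continuous, and $\{G_n\}\subset B(M)$ weakly almost additive. Then $\lim_{k\to\infty}\limsup_{n\to\infty}n^{-1}\|G_n-k^{-1}S_nG_k\|_\infty=0$.
   Context: $B(M)$: bounded Borel real functions, $\|f\|_\infty=\sup|f|$; $S_nG=\sum_{k=0}^{n-1}G\circ\varphi^k$. Weakly almost additive: there is a real sequence $\{C_n\}$ with $\lim_nn^{-1}C_n=0$ and $-C_m+G_m+G_n\circ\varphi^m\le G_{m+n}\le C_m+G_m+G_n\circ\varphi^m$ for all $m,n\ge1$. *)

theory Defs
  imports "HOL-Analysis.Analysis"
begin

definition sup_norm :: "('a \<Rightarrow> real) \<Rightarrow> real" where
  "sup_norm f = (SUP x. \<bar>f x\<bar>)"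

definition birkhoff_sum :: "('a \<Rightarrow> 'a) \<Rightarrow> nat \<Rightarrow> ('a \<Rightarrow> real) \<Rightarrow> 'a \<Rightarrow> real" where
  "birkhoff_sum \<phi> n g x = (\<Sum>k<n. g ((\<phi> ^^ k) x))"

definition weakly_almost_additive :: "('a \<Rightarrow> 'a) \<Rightarrow> (nat \<Rightarrow> 'a \<Rightarrow> real) \<Rightarrow> bool" where
  "weakly_almost_additive \<phi> G \<longleftrightarrow>
     (\<exists>C :: nat \<Rightarrow> real. (\<lambda>n. C n / real n) \<longlonglongrightarrow> 0 \<and>
        (\<forall>m n x. m \<ge> 1 \<longrightarrow> n \<ge> 1 \<longrightarrow>
           - C m + G m x + G n ((\<phi> ^^ m) x) \<le> G (m + n) x \<and>
           G (m + n) x \<le> C m + G m x + G n ((\<phi> ^^ m) x)))"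

end

theory Submission
  imports Defs
begin

lemma sum_split_add: "(\<Sum>t<a+b. f t) = (\<Sum>t<a. f t) + (\<Sum>t<b. f (a+t))" for f :: "nat \<Rightarrow> real"
  by (induction b) simp_all

lemma sum_reindex_blocks: "(\<Sum>t<Q*k. f t) = (\<Sum>j<k. \<Sum>i<Q. f (j + i*k))" for f :: "nat \<Rightarrow> real"
proof (induction Q)
  case 0 then show ?case by simp
next
  case (Suc Q)
  have "(\<Sum>t<Suc Q*k. f t) = (\<Sum>t<Q*k. f t) + (\<Sum>t<k. f (Q*k+t))"
    using sum_split_add[of f "Q*k" k] by (simp add: add.commute)
  also have "\<dots> = (\<Sum>j<k. (\<Sum>i<Q. f (j + i*k)) + f (j + Q*k))"
    using Suc by (simp add: sum.distrib add.commute)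
  also have "\<dots> = (\<Sum>j<k. \<Sum>i<Suc Q. f (j + i*k))" by simp
  finally show ?case .
qed

lemma funpow_apply_add: "(f ^^ a) ((f ^^ b) y) = (f ^^ (a + b)) y"
  by (simp add: funpow_add)

lemma blocks:
  fixes G :: "nat \<Rightarrow> 'a \<Rightarrow> real"
  assumes wa: "\<And>m n x. m \<ge> 1 \<Longrightarrow> n \<ge> 1 \<Longrightarrow> \<bar>G (m+n) x - G m x - G n ((\<phi>^^m) x)\<bar> \<le> C m"
    and k: "k \<ge> 1" and r: "r \<ge> 1"
  shows "\<bar>G (q*k + r) y - (\<Sum>i<q. G k ((\<phi>^^(i*k)) y)) - G r ((\<phi>^^(q*k)) y)\<bar> \<le> real q * C k"
proof (induction q arbitrary: y)
  case 0 then show ?case by simp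
next
  case (Suc q)
  have e1: "\<bar>G (k + (q*k+r)) y - G k y - G (q*k+r) ((\<phi>^^k) y)\<bar> \<le> C k"
    using wa[of k "q*k+r" y] k r by simp
  have e2: "\<bar>G (q*k + r) ((\<phi>^^k) y) - (\<Sum>i<q. G k ((\<phi>^^(i*k + k)) y)) - G r ((\<phi>^^(q*k+k)) y)\<bar> \<le> real q * C k"
    using Suc[of "(\<phi>^^k) y"] by (simp add: funpow_apply_add)
  have s: "(\<Sum>i<Suc q. G k ((\<phi>^^(i*k)) y)) = G k y + (\<Sum>i<q. G k ((\<phi>^^(i*k + k)) y))"
    by (subst sum.lessThan_Suc_shift) (simp add: add.commute)
  have eq: "Suc q * k + r = k + (q*k+r)" "q*k + k = Suc q * k" by simp_all
  have rs: "real (Suc q) * C k = real q * C k + C k" by (simp add: algebra_simps)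
  show ?case unfolding s eq(1) rs using e1 e2 eq(2) by (simp only: abs_le_iff) linarith
qed

lemma offset_block:
  fixes G :: "nat \<Rightarrow> 'a \<Rightarrow> real"
  assumes wa: "\<And>m n x. m \<ge> 1 \<Longrightarrow> n \<ge> 1 \<Longrightarrow> \<bar>G (m+n) x - G m x - G n ((\<phi>^^m) x)\<bar> \<le> C m"
    and k: "k \<ge> 1" and Q: "Q \<ge> 1" and j: "j < k"
    and Cb: "\<And>m. 1 \<le> m \<Longrightarrow> m \<le> k \<Longrightarrow> \<bar>C m\<bar> \<le> B"
    and Gb: "\<And>m x. 1 \<le> m \<Longrightarrow> m \<le> k \<Longrightarrow> \<bar>G m x\<bar> \<le> B"
    and Ck: "C k \<ge> 0"
  shows "\<bar>G (Q*k) y - (\<Sum>i<Q. G k ((\<phi>^^(j + i*k)) y))\<bar> \<le> 4*B + real Q * C k"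
proof -
  have B0: "B \<ge> 0" using Cb[of k] k by simp
  obtain p where p: "Q = Suc p" using Q by (cases Q) auto
  have sQ: "(\<Sum>i<Q. G k ((\<phi>^^(j + i*k)) y)) = (\<Sum>i<p. G k ((\<phi>^^(j + i*k)) y)) + G k ((\<phi>^^(j + p*k)) y)"
    by (simp add: p)
  have pC: "real p * C k \<le> real Q * C k" using Ck p by (simp add: mult_right_mono)
  show ?thesis
  proof (cases "j = 0")
    case True
    have "\<bar>G (p*k + k) y - (\<Sum>i<p. G k ((\<phi>^^(i*k)) y)) - G k ((\<phi>^^(p*k)) y)\<bar> \<le> real p * C k"
      using blocks[OF wa k k] by blast
    moreover have "Q*k = p*k + k" using p by simp
    ultimately show ?thesis using sQ True pC B0 by auto
  next
    case False
    have e1: "\<bar>G (j + (p*k + (k-j))) y - G j y - G (p*k + (k-j)) ((\<phi>^^j) y)\<bar> \<le> C j"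
      using wa[of j "p*k+(k-j)" y] False j by simp
    have e2: "\<bar>G (p*k + (k-j)) ((\<phi>^^j) y) - (\<Sum>i<p. G k ((\<phi>^^(i*k+j)) y)) - G (k-j) ((\<phi>^^(p*k+j)) y)\<bar> \<le> real p * C k"
      using blocks[OF wa k, of "k-j" p "(\<phi>^^j) y"] j by (simp add: funpow_apply_add)
    have eq: "Q*k = j + (p*k + (k-j))" using p j by simp
    have b1: "\<bar>C j\<bar> \<le> B" "\<bar>G j y\<bar> \<le> B" using Cb[of j] Gb[of j] False j by auto
    have b2: "\<bar>G (k-j) ((\<phi>^^(p*k+j)) y)\<bar> \<le> B" using Gb[of "k-j"] False j by auto
    have b3: "\<bar>G k ((\<phi>^^(j + p*k)) y)\<bar> \<le> B" using Gb[of k] k by auto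
    have s2: "(\<Sum>i<p. G k ((\<phi>^^(i*k+j)) y)) = (\<Sum>i<p. G k ((\<phi>^^(j + i*k)) y))"
      by (simp add: add.commute)
    show ?thesis unfolding eq sQ using e1 e2 b1 b2 b3 pC s2 by (simp only: abs_le_iff) linarith
  qed
qed

lemma sum_abs_bound:
  assumes "\<And>t. t < n \<Longrightarrow> \<bar>f t\<bar> \<le> (B::real)"
  shows "\<bar>\<Sum>t<n. f t\<bar> \<le> real n * B"
proof -
  have "\<bar>\<Sum>t<n. f t\<bar> \<le> (\<Sum>t<n. \<bar>f t\<bar>)" by (rule sum_abs)
  also have "\<dots> \<le> (\<Sum>t<n. B)" using assms by (intro sum_mono) auto
  finally show ?thesis by simp
qed

lemma full_blocks:
  fixes G :: "nat \<Rightarrow> 'a \<Rightarrow> real"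
  assumes wa: "\<And>m n x. m \<ge> 1 \<Longrightarrow> n \<ge> 1 \<Longrightarrow> \<bar>G (m+n) x - G m x - G n ((\<phi>^^m) x)\<bar> \<le> C m"
    and k: "k \<ge> 1" and Q: "Q \<ge> 1"
    and Cb: "\<And>m. 1 \<le> m \<Longrightarrow> m \<le> k \<Longrightarrow> \<bar>C m\<bar> \<le> B"
    and Gb: "\<And>m x. 1 \<le> m \<Longrightarrow> m \<le> k \<Longrightarrow> \<bar>G m x\<bar> \<le> B"
    and Ck: "C k \<ge> 0"
  shows "\<bar>real k * G (Q*k) y - (\<Sum>t<Q*k. G k ((\<phi>^^t) y))\<bar> \<le> real k * (4*B + real Q * C k)"
proof -
  have "real k * G (Q*k) y - (\<Sum>t<Q*k. G k ((\<phi>^^t) y))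
      = (\<Sum>j<k. G (Q*k) y - (\<Sum>i<Q. G k ((\<phi>^^(j + i*k)) y)))"
    by (simp add: sum_reindex_blocks[of "\<lambda>t. G k ((\<phi>^^t) y)"] sum_subtractf)
  also have "\<bar>\<dots>\<bar> \<le> real k * (4*B + real Q * C k)"
    by (rule sum_abs_bound, rule offset_block[OF wa k Q _ Cb Gb Ck]) auto
  finally show ?thesis .
qed

lemma main_bound:
  fixes G :: "nat \<Rightarrow> 'a \<Rightarrow> real"
  assumes wa: "\<And>m n x. m \<ge> 1 \<Longrightarrow> n \<ge> 1 \<Longrightarrow> \<bar>G (m+n) x - G m x - G n ((\<phi>^^m) x)\<bar> \<le> C m"
    and k: "k \<ge> 1" and n: "n \<ge> 1"
    and Cb: "\<And>m. 1 \<le> m \<Longrightarrow> m \<le> k \<Longrightarrow> \<bar>C m\<bar> \<le> B"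
    and Gb: "\<And>m x. 1 \<le> m \<Longrightarrow> m \<le> k \<Longrightarrow> \<bar>G m x\<bar> \<le> B"
    and Ck: "C k \<ge> 0"
  shows "\<bar>real k * G n x - (\<Sum>t<n. G k ((\<phi>^^t) x))\<bar> \<le> 7 * real k * B + real n * C k"
proof -
  have B0: "B \<ge> 0" using Cb[of k] k by simp
  define Q where "Q = n div k"
  define R where "R = n mod k"
  have nQR: "n = Q*k + R" unfolding Q_def R_def by simp
  have Rk: "R < k" unfolding R_def using k by simp
  have QkC: "real k * (real Q * C k) \<le> real n * C k"
  proof -
    have "real k * (real Q * C k) = real (Q*k) * C k" by simp
    also have "\<dots> \<le> real n * C k" using nQR Ck by (intro mult_right_mono) auto
    finally show ?thesis .
  qed
  have sb: "\<And>y m. m \<le> k \<Longrightarrow> \<bar>\<Sum>t<m. G k ((\<phi>^^t) y)\<bar> \<le> real k * B"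
  proof -
    fix y m assume "m \<le> k"
    have "\<bar>\<Sum>t<m. G k ((\<phi>^^t) y)\<bar> \<le> real m * B" by (rule sum_abs_bound) (use Gb k in auto)
    also have "\<dots> \<le> real k * B" using \<open>m \<le> k\<close> B0 by (intro mult_right_mono) auto
    finally show "\<bar>\<Sum>t<m. G k ((\<phi>^^t) y)\<bar> \<le> real k * B" .
  qed
  show ?thesis
  proof (cases "R = 0")
    case True
    hence Q1: "Q \<ge> 1" using nQR n by (cases Q) auto
    have "\<bar>real k * G n x - (\<Sum>t<n. G k ((\<phi>^^t) x))\<bar> \<le> real k * (4*B + real Q * C k)"
      using full_blocks[OF wa k Q1 Cb Gb Ck, of x] nQR True by simp
    also have "\<dots> = 4 * (real k * B) + real k * (real Q * C k)" by (simp add: algebra_simps)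
    also have "\<dots> \<le> 7 * (real k * B) + real n * C k"
    proof - have "real k * B \<ge> 0" using B0 by simp
      then show ?thesis using QkC by linarith qed
    also have "\<dots> = 7 * real k * B + real n * C k" by simp
    finally show ?thesis .
  next
    case R0: False
    show ?thesis
    proof (cases "Q = 0")
      case True
      hence nk: "n \<le> k" using nQR Rk by simp
      have "\<bar>real k * G n x\<bar> \<le> real k * B" using Gb[of n x] n nk by (simp add: abs_mult mult_left_mono)
      moreover have "\<bar>\<Sum>t<n. G k ((\<phi>^^t) x)\<bar> \<le> real k * B" using sb nk by blast
      moreover have "real n * C k \<ge> 0" using Ck by simp
      moreover have "real k * B \<ge> 0" using B0 by simp
      ultimately show ?thesis by (simp only: abs_le_iff) linarith
    next
      case False
      hence Q1: "Q \<ge> 1" by simp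
      have nRQ: "n = R + Q*k" using nQR by simp
      have e1: "\<bar>G (R + Q*k) x - G R x - G (Q*k) ((\<phi>^^R) x)\<bar> \<le> C R"
        using wa[of R "Q*k" x] R0 Q1 k by simp
      have e1': "\<bar>real k * G (R + Q*k) x - real k * G R x - real k * G (Q*k) ((\<phi>^^R) x)\<bar> \<le> real k * B"
      proof -
        have "\<bar>real k * G (R + Q*k) x - real k * G R x - real k * G (Q*k) ((\<phi>^^R) x)\<bar>
            = \<bar>real k * (G (R + Q*k) x - G R x - G (Q*k) ((\<phi>^^R) x))\<bar>"
          by (simp only: right_diff_distrib)
        also have "\<dots> = real k * \<bar>G (R + Q*k) x - G R x - G (Q*k) ((\<phi>^^R) x)\<bar>"
          by (simp only: abs_mult abs_of_nat)
        also have "\<dots> \<le> real k * B" using e1 Cb[of R] R0 Rk by (intro mult_left_mono) auto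
        finally show ?thesis .
      qed
      have e2: "\<bar>real k * G R x\<bar> \<le> real k * B" using Gb[of R x] R0 Rk by (simp add: abs_mult mult_left_mono)
      have e3: "\<bar>real k * G (Q*k) ((\<phi>^^R) x) - (\<Sum>t<Q*k. G k ((\<phi>^^t) ((\<phi>^^R) x)))\<bar> \<le> real k * (4*B + real Q * C k)"
        by (rule full_blocks[OF wa k Q1 Cb Gb Ck])
      have e4: "\<bar>\<Sum>t<R. G k ((\<phi>^^t) x)\<bar> \<le> real k * B" using sb Rk by simp
      have split: "(\<Sum>t<n. G k ((\<phi>^^t) x)) = (\<Sum>t<R. G k ((\<phi>^^t) x)) + (\<Sum>t<Q*k. G k ((\<phi>^^t) ((\<phi>^^R) x)))"
        unfolding nRQ sum_split_add by (simp add: funpow_apply_add add.commute)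
      have dist: "real k * (4*B + real Q * C k) = 4 * (real k * B) + real k * (real Q * C k)"
        by (simp add: algebra_simps)
      have seven: "7 * real k * B = 7 * (real k * B)" by simp
      show ?thesis unfolding split seven using e1' e2 e3 e4 QkC dist nRQ[symmetric]
        by (simp only: abs_le_iff) linarith
    qed
  qed
qed

lemma sup_norm_bound:
  fixes f :: "'a \<Rightarrow> real"
  assumes "\<And>x. \<bar>f x\<bar> \<le> c"
  shows "sup_norm f \<le> c" "0 \<le> sup_norm f"
proof -
  show "sup_norm f \<le> c" unfolding sup_norm_def by (rule cSUP_least) (use assms in auto)
  have bdd: "bdd_above (range (\<lambda>x. \<bar>f x\<bar>))" using assms by (intro bdd_aboveI[of _ c]) auto
  have "\<bar>f undefined\<bar> \<le> sup_norm f" unfolding sup_norm_def by (rule cSUP_upper[OF _ bdd]) simp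
  then show "0 \<le> sup_norm f" by linarith
qed

theorem lemma6p2:
  fixes \<phi> :: "'a::metric_space \<Rightarrow> 'a" and G :: "nat \<Rightarrow> 'a \<Rightarrow> real"
  assumes "compact (UNIV :: 'a set)"
    and "continuous_on UNIV \<phi>"
    and "\<And>n. n \<ge> 1 \<Longrightarrow> G n \<in> borel_measurable borel"
    and "\<And>n. n \<ge> 1 \<Longrightarrow> bounded (range (G n))"
    and "weakly_almost_additive \<phi> G"
  shows "(\<lambda>k. limsup (\<lambda>n. ereal (sup_norm (\<lambda>x. G n x - birkhoff_sum \<phi> n (G k) x / real k) / real n)))
           \<longlonglongrightarrow> 0"
proof -
  obtain C :: "nat \<Rightarrow> real" where Clim: "(\<lambda>n. C n / real n) \<longlonglongrightarrow> 0" and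
    Cineq: "\<And>m n x. m \<ge> 1 \<Longrightarrow> n \<ge> 1 \<Longrightarrow>
           - C m + G m x + G n ((\<phi> ^^ m) x) \<le> G (m + n) x \<and>
           G (m + n) x \<le> C m + G m x + G n ((\<phi> ^^ m) x)"
    using assms(5) unfolding weakly_almost_additive_def by blast
  have wa: "\<And>m n x. m \<ge> 1 \<Longrightarrow> n \<ge> 1 \<Longrightarrow> \<bar>G (m+n) x - G m x - G n ((\<phi>^^m) x)\<bar> \<le> C m"
    using Cineq by (simp add: abs_le_iff) (smt (verit))
  have Cnn: "\<And>m. m \<ge> 1 \<Longrightarrow> C m \<ge> 0"
    using Cineq[of _ 1 undefined] by (smt (verit) le_numeral_extra(4))
  have "\<forall>m. \<exists>b. m \<ge> 1 \<longrightarrow> (\<forall>x. \<bar>G m x\<bar> \<le> b)"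
  proof
    fix m
    show "\<exists>b. m \<ge> 1 \<longrightarrow> (\<forall>x. \<bar>G m x\<bar> \<le> b)"
    proof (cases "m \<ge> 1")
      case True
      then obtain b where "\<forall>y\<in>range (G m). norm y \<le> b" using assms(4) bounded_iff by blast
      then show ?thesis by auto
    qed auto
  qed
  then obtain bnd where bnd: "\<And>m x. m \<ge> 1 \<Longrightarrow> \<bar>G m x\<bar> \<le> bnd m" by metis
  define B where "B k = (\<Sum>m\<in>{1..k}. \<bar>C m\<bar> + \<bar>bnd m\<bar>)" for k
  have Bterm: "\<And>m k. 1 \<le> m \<Longrightarrow> m \<le> k \<Longrightarrow> \<bar>C m\<bar> + \<bar>bnd m\<bar> \<le> B k"
    unfolding B_def by (rule member_le_sum) auto
  have Cb: "\<And>m k. 1 \<le> m \<Longrightarrow> m \<le> k \<Longrightarrow> \<bar>C m\<bar> \<le> B k"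
    using Bterm by (smt (verit))
  have Gb: "\<And>m k x. 1 \<le> m \<Longrightarrow> m \<le> k \<Longrightarrow> \<bar>G m x\<bar> \<le> B k"
  proof -
    fix m k :: nat and x assume h: "1 \<le> m" "m \<le> k"
    have "\<bar>G m x\<bar> \<le> bnd m" using bnd h by blast
    moreover have "\<bar>C m\<bar> + \<bar>bnd m\<bar> \<le> B k" using Bterm h by blast
    ultimately show "\<bar>G m x\<bar> \<le> B k" by linarith
  qed
  define L where "L k = limsup (\<lambda>n. ereal (sup_norm (\<lambda>x. G n x - birkhoff_sum \<phi> n (G k) x / real k) / real n))" for k
  have Lb: "0 \<le> L k \<and> L k \<le> ereal (C k / real k)" if k: "k \<ge> 1" for k
  proof -
    have pt: "sup_norm (\<lambda>x. G n x - birkhoff_sum \<phi> n (G k) x / real k) / real n \<le> 7 * B k / real n + C k / real k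
          \<and> 0 \<le> sup_norm (\<lambda>x. G n x - birkhoff_sum \<phi> n (G k) x / real k) / real n" if n: "n \<ge> 1" for n
    proof -
      have "\<bar>G n x - birkhoff_sum \<phi> n (G k) x / real k\<bar> \<le> 7 * B k + real n * C k / real k" for x
      proof -
        have mb: "\<bar>real k * G n x - (\<Sum>t<n. G k ((\<phi>^^t) x))\<bar> \<le> 7 * real k * B k + real n * C k"
          by (rule main_bound[OF wa k n]) (use Cb Gb Cnn k in auto)
        have kp: "real k > 0" using k by simp
        have "G n x - birkhoff_sum \<phi> n (G k) x / real k = (real k * G n x - (\<Sum>t<n. G k ((\<phi>^^t) x))) / real k"
          unfolding birkhoff_sum_def using kp by (simp add: field_simps)
        also have "\<bar>\<dots>\<bar> = \<bar>real k * G n x - (\<Sum>t<n. G k ((\<phi>^^t) x))\<bar> / real k" by simp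
        also have "\<dots> \<le> (7 * real k * B k + real n * C k) / real k" using mb kp by (simp add: divide_right_mono)
        also have "\<dots> = 7 * B k + real n * C k / real k" using kp by (simp add: field_simps)
        finally show ?thesis .
      qed
      note sb = sup_norm_bound[of "\<lambda>x. G n x - birkhoff_sum \<phi> n (G k) x / real k", OF this]
      have np: "real n > 0" using n by simp
      have "sup_norm (\<lambda>x. G n x - birkhoff_sum \<phi> n (G k) x / real k) / real n \<le> (7 * B k + real n * C k / real k) / real n"
        using sb(1) np by (simp add: divide_right_mono)
      also have "\<dots> = 7 * B k / real n + C k / real k" using np by (simp add: field_simps)
      finally show ?thesis using sb(2) np by simp
    qed
    have ev1: "eventually (\<lambda>n. ereal (sup_norm (\<lambda>x. G n x - birkhoff_sum \<phi> n (G k) x / real k) / real n)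
        \<le> ereal (7 * B k / real n + C k / real k)) sequentially"
      using pt by (intro eventually_sequentiallyI[of 1]) auto
    have ev0: "eventually (\<lambda>n. 0 \<le> ereal (sup_norm (\<lambda>x. G n x - birkhoff_sum \<phi> n (G k) x / real k) / real n)) sequentially"
      using pt by (intro eventually_sequentiallyI[of 1]) auto
    have lim: "(\<lambda>n. ereal (7 * B k / real n + C k / real k)) \<longlonglongrightarrow> ereal (C k / real k)"
    proof -
      have "(\<lambda>n. 7 * B k / real n + C k / real k) \<longlonglongrightarrow> 0 + C k / real k"
        by (intro tendsto_add lim_const_over_n tendsto_const)
      then show ?thesis by simp
    qed
    have "L k \<le> limsup (\<lambda>n. ereal (7 * B k / real n + C k / real k))"
      unfolding L_def by (rule Limsup_mono[OF ev1])
    also have "\<dots> = ereal (C k / real k)" by (rule lim_imp_Limsup[OF _ lim]) simp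
    finally have u: "L k \<le> ereal (C k / real k)" .
    have "0 \<le> L k" unfolding L_def by (rule le_Limsup[OF _ ev0]) simp
    with u show ?thesis by simp
  qed
  have g: "(\<lambda>k. ereal (C k / real k)) \<longlonglongrightarrow> 0"
    using Clim by (simp add: zero_ereal_def)
  have "L \<longlonglongrightarrow> 0"
  proof (rule tendsto_sandwich[OF _ _ tendsto_const g])
    show "eventually (\<lambda>k. 0 \<le> L k) sequentially" using Lb by (intro eventually_sequentiallyI[of 1]) auto
    show "eventually (\<lambda>k. L k \<le> ereal (C k / real k)) sequentially" using Lb by (intro eventually_sequentiallyI[of 1]) auto
  qed
  then show ?thesis unfolding L_def .
qed

end
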